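(* Let $H$ be a separated labeled hypergraph and let $H'$ be a minor of $H$. If $\mathcal A[H']\neq k[H']$, then $\mathcal A[H]\neq k[H]$.
   Context: Let $k$ be a field and $S=k[x_1,\dots,x_n,y]$. For an integral convex polytope $\mathcal P\subseteq\mathbb R^n_{\ge 0}$, the Ehrhart ring $\mathcal A[\mathcal P]$ is the $k$-subspace of $S$ spanned by the monomials $x^{\mathbf a}y^t$ with $t\in\mathbb N$, $\mathbf a\in t\mathcal P\cap\mathbb Z^n$; the polytopal ring is $k[\mathcal P]=k[x^{\mathbf a}y:\mathbf a\in\mathcal P\cap\mathbb Z^n]$. A labeled hypergraph $H=(V,f)$ on a finite set $V$ with alphabet $\{x_1,\dots,x_n\}$ is a function $f:\{x_1,\dots,x_n\}\to\mathcal P(V)$; its edges are the nonempty sets in the image of $f$. $H$ is separated if for all distinct $v,w\in V$ there are edges $F,G$ with $v\in F\setminus G$, $w\in G\setminus F$. For separated $H$, let $x^{\mathbf a_v}=\prod_{x:\,v\in f(x)}x$ for $v\in V$, let $\mathcal P_H=\mathrm{conv}\{\mathbf a_v:v\in V\}$, and $\mathcal A[H]=\mathcal A[\mathcal P_H]$, $k[H]=k[\mathcal P_H]$. For $W\subseteq V$, the induced subhypergraph is $H|_W=(W,f_W)$ with $f_W(x)=f(x)\cap W$. The deletion of an edge $E$ from $H$ is $H\setminus E=H|_{V\setminus E}$. A minor of $H$ is a labeled hypergraph obtained from $H$ by a finite sequence of edge deletions. *)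

theory Defs
  imports "HOL-Analysis.Analysis" "HOL-Library.Poly_Mapping"
begin

text \<open>The ring S = k[x_1,...,x_n,y] is modelled as polynomial mappings from
  monomials (finitely supported 'n option to nat maps) to the field 'k, where Some i stands for x_i
  and None stands for y.\<close>

type_synonym ('n, 'k) spoly = "('n option \<Rightarrow>\<^sub>0 nat) \<Rightarrow>\<^sub>0 'k"

definition xexp :: "(('n::finite) option \<Rightarrow>\<^sub>0 nat) \<Rightarrow> real ^ 'n" where
  "xexp m = (\<chi> i. real (Poly_Mapping.lookup m (Some i)))"

definition yexp :: "(('n::finite) option \<Rightarrow>\<^sub>0 nat) \<Rightarrow> nat" where
  "yexp m = Poly_Mapping.lookup m None"

text \<open>Dilation t P; for t = 0 we use the standard convention 0P = {0}
  (the degree-0 part of an Ehrhart ring is k).\<close>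
definition dilate :: "nat \<Rightarrow> (real ^ 'n) set \<Rightarrow> (real ^ 'n) set" where
  "dilate t P = (if t = 0 then {0} else (\<lambda>p. real t *\<^sub>R p) ` P)"

text \<open>Ehrhart ring: the k-span of the monomials x^a y^t with a in tP \<inter> Z^n,
  i.e. all polynomials supported on these monomials.\<close>
definition ehrhart_ring :: "(real ^ ('n::finite)) set \<Rightarrow> ('n, 'k::field) spoly set" where
  "ehrhart_ring P = {p. Poly_Mapping.keys p \<subseteq> {m. xexp m \<in> dilate (yexp m) P}}"

inductive_set subalgebra_gen :: "('n, 'k::field) spoly set \<Rightarrow> ('n, 'k) spoly set"
  for G where
  gen: "g \<in> G \<Longrightarrow> g \<in> subalgebra_gen G"
| const: "Poly_Mapping.single 0 c \<in> subalgebra_gen G"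
| add: "p \<in> subalgebra_gen G \<Longrightarrow> q \<in> subalgebra_gen G \<Longrightarrow> p + q \<in> subalgebra_gen G"
| mult: "p \<in> subalgebra_gen G \<Longrightarrow> q \<in> subalgebra_gen G \<Longrightarrow> p * q \<in> subalgebra_gen G"

definition polytopal_ring :: "(real ^ ('n::finite)) set \<Rightarrow> ('n, 'k::field) spoly set" where
  "polytopal_ring P = subalgebra_gen
     {Poly_Mapping.single m 1 | m. yexp m = 1 \<and> xexp m \<in> P}"

type_synonym ('v, 'n) lhg = "'v set \<times> ('n \<Rightarrow> 'v set)"

definition labeled_hypergraph :: "('v, 'n) lhg \<Rightarrow> bool" where
  "labeled_hypergraph H \<longleftrightarrow> finite (fst H) \<and> (\<forall>x. snd H x \<subseteq> fst H)"

definition edges :: "('v, 'n) lhg \<Rightarrow> 'v set set" where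
  "edges H = {snd H x | x. snd H x \<noteq> {}}"

definition separated :: "('v, 'n) lhg \<Rightarrow> bool" where
  "separated H \<longleftrightarrow> (\<forall>v\<in>fst H. \<forall>w\<in>fst H. v \<noteq> w \<longrightarrow>
      (\<exists>F\<in>edges H. \<exists>G\<in>edges H. v \<in> F \<and> v \<notin> G \<and> w \<in> G \<and> w \<notin> F))"

definition avec :: "('v, 'n::finite) lhg \<Rightarrow> 'v \<Rightarrow> real ^ 'n" where
  "avec H v = (\<chi> x. if v \<in> snd H x then 1 else 0)"

definition hg_polytope :: "('v, 'n::finite) lhg \<Rightarrow> (real ^ 'n) set" where
  "hg_polytope H = convex hull (avec H ` fst H)"

definition hg_ehrhart :: "('v, 'n::finite) lhg \<Rightarrow> ('n, 'k::field) spoly set" where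
  "hg_ehrhart H = ehrhart_ring (hg_polytope H)"

definition hg_ring :: "('v, 'n::finite) lhg \<Rightarrow> ('n, 'k::field) spoly set" where
  "hg_ring H = polytopal_ring (hg_polytope H)"

definition induced :: "('v, 'n) lhg \<Rightarrow> 'v set \<Rightarrow> ('v, 'n) lhg" where
  "induced H W = (W, \<lambda>x. snd H x \<inter> W)"

definition delete_edge :: "('v, 'n) lhg \<Rightarrow> 'v set \<Rightarrow> ('v, 'n) lhg" where
  "delete_edge H E = induced H (fst H - E)"

definition deletion_step :: "('v, 'n) lhg \<Rightarrow> ('v, 'n) lhg \<Rightarrow> bool" where
  "deletion_step H H' \<longleftrightarrow> (\<exists>E\<in>edges H. H' = delete_edge H E)"

definition is_minor :: "('v, 'n) lhg \<Rightarrow> ('v, 'n) lhg \<Rightarrow> bool" where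
  "is_minor H' H \<longleftrightarrow> deletion_step\<^sup>*\<^sup>* H H'"

end

theory Submission
  imports Defs
begin

definition proj :: "'a set \<Rightarrow> ('a \<Rightarrow>\<^sub>0 'b::zero) \<Rightarrow> ('a \<Rightarrow>\<^sub>0 'b)" where
  "proj Z p = Abs_poly_mapping (\<lambda>m. if m \<in> Z then Poly_Mapping.lookup p m else 0)"

lemma lookup_proj: "Poly_Mapping.lookup (proj Z p) m = (if m \<in> Z then Poly_Mapping.lookup p m else 0)"
proof -
  have "finite {m. (if m \<in> Z then Poly_Mapping.lookup p m else 0) \<noteq> 0}"
    by (rule finite_subset[OF _ finite_keys[of p]]) (auto simp: in_keys_iff)
  then show ?thesis unfolding proj_def by (simp add: Abs_poly_mapping_inverse)
qed

lemma proj_add: "proj Z (p + q) = proj Z p + proj Z (q :: 'a \<Rightarrow>\<^sub>0 'b::monoid_add)"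
  by (rule poly_mapping_eqI) (simp add: lookup_proj lookup_add)

lemma proj_id: "Poly_Mapping.keys p \<subseteq> Z \<Longrightarrow> proj Z p = p"
  by (rule poly_mapping_eqI) (auto simp: lookup_proj in_keys_iff)

lemma proj_zero: "Poly_Mapping.keys p \<inter> Z = {} \<Longrightarrow> proj Z p = 0"
  by (rule poly_mapping_eqI) (auto simp: lookup_proj in_keys_iff)

lemma keys_proj: "Poly_Mapping.keys (proj Z p) \<subseteq> Z"
  by (auto simp: lookup_proj in_keys_iff split: if_splits)

lemma keys_proj_rest: "Poly_Mapping.keys (p - proj Z (p::'a \<Rightarrow>\<^sub>0 'b::ab_group_add)) \<inter> Z = {}"
  by (auto simp: lookup_proj in_keys_iff lookup_minus)

lemma proj_mult:
  fixes p q :: "('a::comm_monoid_add \<Rightarrow>\<^sub>0 'b::comm_ring)"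
  assumes Z: "\<And>a b. a + b \<in> Z \<longleftrightarrow> a \<in> Z \<and> b \<in> Z"
  shows "proj Z (p * q) = proj Z p * proj Z q"
proof -
  define a b r s where "a = proj Z p" "b = proj Z q" "r = p - a" "s = q - b"
  have pq: "p * q = a * b + (a * s + r * b + r * s)"
    unfolding a_b_r_s_def by (simp add: algebra_simps)
  have ka: "Poly_Mapping.keys a \<subseteq> Z" "Poly_Mapping.keys b \<subseteq> Z"
    unfolding a_b_r_s_def by (rule keys_proj)+
  have kr: "Poly_Mapping.keys r \<inter> Z = {}" "Poly_Mapping.keys s \<inter> Z = {}"
    unfolding a_b_r_s_def by (rule keys_proj_rest)+
  have 1: "proj Z (a * b) = a * b"
    apply (rule proj_id) using keys_mult[of a b] ka Z by blast
  have 2: "proj Z (a * s) = 0" apply (rule proj_zero) using keys_mult[of a s] kr Z by blast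
  have 3: "proj Z (r * b) = 0" apply (rule proj_zero) using keys_mult[of r b] kr Z by blast
  have 4: "proj Z (r * s) = 0" apply (rule proj_zero) using keys_mult[of r s] kr Z by blast
  have "proj Z (p * q) = a * b" unfolding pq proj_add 1 2 3 4 by simp
  then show ?thesis by (simp add: a_b_r_s_def)
qed

lemma xexp_nth: "xexp m $ i = real (Poly_Mapping.lookup m (Some i))"
  by (simp add: xexp_def)

lemma subalgebra_gen_mono: "p \<in> subalgebra_gen G \<Longrightarrow> G \<subseteq> G' \<Longrightarrow> p \<in> subalgebra_gen G'"
  by (induction rule: subalgebra_gen.induct) (auto intro: subalgebra_gen.intros)

locale step_setup =
  fixes H :: "('v, 'n::finite) lhg" and i :: 'n
begin

definition "W = fst H - snd H i"
definition "H' = delete_edge H (snd H i)"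
definition "Z = {m :: 'n option \<Rightarrow>\<^sub>0 nat. Poly_Mapping.lookup m (Some i) = 0}"

lemma Z_add: "a + b \<in> Z \<longleftrightarrow> a \<in> Z \<and> b \<in> Z"
  by (simp add: Z_def lookup_add)

lemma avec_H': "v \<in> W \<Longrightarrow> avec H' v = avec H v"
  by (simp add: avec_def H'_def delete_edge_def induced_def W_def)

lemma P'_eq: "hg_polytope H' = convex hull (avec H ` W)"
proof -
  have "avec H' ` W = avec H ` W" using avec_H' by (auto simp: image_def)
  moreover have "fst H' = W" by (simp add: H'_def delete_edge_def induced_def W_def)
  ultimately show ?thesis by (simp add: hg_polytope_def)
qed

lemma P'_sub: "hg_polytope H' \<subseteq> hg_polytope H"
proof -
  have "convex hull (avec H ` W) \<subseteq> convex hull (avec H ` fst H)"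
    by (rule hull_mono) (auto simp: W_def)
  then show ?thesis by (metis P'_eq hg_polytope_def)
qed

lemma P'_coord: "q \<in> hg_polytope H' \<Longrightarrow> q $ i = 0"
proof -
  assume q: "q \<in> hg_polytope H'"
  have "convex {x :: real ^ 'n. x $ i = 0}"
    by (auto simp: convex_def)
  moreover have "avec H ` W \<subseteq> {x. x $ i = 0}"
    by (auto simp: avec_def W_def)
  ultimately have "convex hull (avec H ` W) \<subseteq> {x. x $ i = 0}"
    by (rule hull_minimal[rotated])
  then show ?thesis using q P'_eq by auto
qed

lemma face: 
  assumes q: "q \<in> hg_polytope H" and qi: "q $ i = 0"
  shows "q \<in> hg_polytope H'"
proof -
  from q obtain S u where S: "finite S" "S \<subseteq> avec H ` fst H" "\<forall>x\<in>S. 0 \<le> u x"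
     "sum u S = 1" "(\<Sum>v\<in>S. u v *\<^sub>R v) = q"
    unfolding hg_polytope_def convex_hull_explicit by blast
  define S' where "S' = {x \<in> S. x $ i = 0}"
  have S1: "\<forall>x\<in>S. x $ i = 0 \<or> x $ i = 1"
  proof
    fix x assume "x \<in> S"
    then obtain v where "x = avec H v" using S(2) by auto
    then show "x $ i = 0 \<or> x $ i = 1" by (simp add: avec_def)
  qed
  have "q $ i = (\<Sum>v\<in>S. u v * v $ i)"
    unfolding S(5)[symmetric] by (subst sum_eq) simp
  then have "(\<Sum>v\<in>S. u v * v $ i) = 0" using qi by simp
  moreover have "\<forall>v\<in>S. 0 \<le> u v * v $ i" using S(3) S1 by auto
  ultimately have z: "\<forall>v\<in>S. u v * v $ i = 0"
    using sum_nonneg_eq_0_iff[OF S(1), of "\<lambda>v. u v * v $ i"] by simp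
  have zero: "\<forall>v\<in>S - S'. u v = 0" using z S1 by (auto simp: S'_def)
  have e1: "sum u S = sum u S'"
    by (rule sum.mono_neutral_right) (use S(1) zero in \<open>auto simp: S'_def\<close>)
  have e2: "(\<Sum>v\<in>S. u v *\<^sub>R v) = (\<Sum>v\<in>S'. u v *\<^sub>R v)"
    by (rule sum.mono_neutral_right) (use S(1) zero in \<open>auto simp: S'_def\<close>)
  have e3: "S' \<subseteq> avec H ` W"
  proof
    fix x assume "x \<in> S'"
    then obtain v where "v \<in> fst H" "x = avec H v" "x $ i = 0" using S(2) by (auto simp: S'_def)
    then have "v \<notin> snd H i" by (auto simp: avec_def)
    then have "v \<in> W" using \<open>v \<in> fst H\<close> by (simp add: W_def)
    then show "x \<in> avec H ` W" using \<open>x = avec H v\<close> by blast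
  qed
  have e4: "finite S'" using S(1) by (simp add: S'_def)
  have e5: "\<forall>x\<in>S'. 0 \<le> u x" using S(3) by (simp add: S'_def)
  have "\<exists>S u. finite S \<and> S \<subseteq> avec H ` W \<and> (\<forall>x\<in>S. 0 \<le> u x) \<and> sum u S = 1 \<and> (\<Sum>v\<in>S. u v *\<^sub>R v) = q"
    apply (rule exI[of _ S'])
    apply (rule exI[of _ u])
    using S(4,5) e1 e2 e3 e4 e5 by simp
  then show ?thesis unfolding P'_eq convex_hull_explicit by blast
qed

lemma A_to_A': 
  assumes "p \<in> (hg_ehrhart H :: ('n,'k::field) spoly set)" "Poly_Mapping.keys p \<subseteq> Z"
  shows "p \<in> hg_ehrhart H'"
  unfolding hg_ehrhart_def ehrhart_ring_def
proof (safe)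
  fix m assume m: "m \<in> Poly_Mapping.keys p"
  then have m1: "xexp m \<in> dilate (yexp m) (hg_polytope H)" using assms(1)
    by (auto simp: hg_ehrhart_def ehrhart_ring_def)
  have mi: "xexp m $ i = 0" using m assms(2) by (auto simp: Z_def xexp_nth)
  show "xexp m \<in> dilate (yexp m) (hg_polytope H')"
  proof (cases "yexp m = 0")
    case True then show ?thesis using m1 by (simp add: dilate_def)
  next
    case False
    then obtain q where q: "q \<in> hg_polytope H" "xexp m = real (yexp m) *\<^sub>R q"
      using m1 by (auto simp: dilate_def)
    then have "q $ i = 0" using mi False by simp
    then show ?thesis using q False face by (auto simp: dilate_def)
  qed
qed

lemma A'_to_A:
  assumes "p \<in> (hg_ehrhart H' :: ('n,'k::field) spoly set)"
  shows "p \<in> hg_ehrhart H" "Poly_Mapping.keys p \<subseteq> Z"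
proof -
  show "p \<in> hg_ehrhart H" unfolding hg_ehrhart_def ehrhart_ring_def
  proof safe
    fix m assume m: "m \<in> Poly_Mapping.keys p"
    then have m1: "xexp m \<in> dilate (yexp m) (hg_polytope H')" using assms(1)
      by (auto simp: hg_ehrhart_def ehrhart_ring_def)
    then show "xexp m \<in> dilate (yexp m) (hg_polytope H)"
      using P'_sub unfolding dilate_def by (auto split: if_splits)
  qed
  show "Poly_Mapping.keys p \<subseteq> Z"
  proof
    fix m assume m: "m \<in> Poly_Mapping.keys p"
    then have m1: "xexp m \<in> dilate (yexp m) (hg_polytope H')" using assms(1)
      by (auto simp: hg_ehrhart_def ehrhart_ring_def)
    then have "xexp m $ i = 0" using P'_coord by (auto simp: dilate_def split: if_splits)
    then show "m \<in> Z" by (simp add: Z_def xexp_nth)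
  qed
qed

lemma k'_sub_k: "p \<in> (hg_ring H' :: ('n,'k::field) spoly set) \<Longrightarrow> p \<in> hg_ring H"
  unfolding hg_ring_def polytopal_ring_def
  by (erule subalgebra_gen_mono) (use P'_sub in auto)

lemma k'_keys: "p \<in> (hg_ring H' :: ('n,'k::field) spoly set) \<Longrightarrow> Poly_Mapping.keys p \<subseteq> Z"
  unfolding hg_ring_def polytopal_ring_def
proof (induction rule: subalgebra_gen.induct)
  case (gen g)
  then obtain m where "g = Poly_Mapping.single m 1" "xexp m \<in> hg_polytope H'" by auto
  then show ?case using P'_coord[of "xexp m"] by (auto simp: Z_def xexp_nth)
next
  case (const c) then show ?case by (auto simp: Z_def)
next
  case (add p q) then show ?case using keys_add[of p q] by auto
next
  case (mult p q) then show ?case using keys_mult[of p q] Z_add by blast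
qed

lemma proj_k: "p \<in> (hg_ring H :: ('n,'k::field) spoly set) \<Longrightarrow> proj Z p \<in> hg_ring H'"
  unfolding hg_ring_def polytopal_ring_def
proof (induction rule: subalgebra_gen.induct)
  case (gen g)
  then obtain m where m: "g = Poly_Mapping.single m 1" "yexp m = 1" "xexp m \<in> hg_polytope H" by auto
  show ?case
  proof (cases "m \<in> Z")
    case True
    then have "proj Z g = g" using m by (intro proj_id) auto
    moreover have "xexp m \<in> hg_polytope H'" using True m face by (auto simp: Z_def xexp_nth)
    ultimately show ?thesis using m by (auto intro: subalgebra_gen.gen)
  next
    case False
    then have "proj Z g = 0" using m by (intro proj_zero) auto
    then have "proj Z g = Poly_Mapping.single 0 0" by simp
    then show ?thesis by (simp only: subalgebra_gen.const)
  qed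
next
  case (const c)
  have "proj Z (Poly_Mapping.single 0 c) = Poly_Mapping.single 0 c"
    by (rule proj_id) (auto simp: Z_def)
  then show ?case by (simp add: subalgebra_gen.const)
next
  case (add p q) then show ?case by (simp add: proj_add subalgebra_gen.add)
next
  case (mult p q) then show ?case by (simp add: proj_mult[OF Z_add] subalgebra_gen.mult)
qed

lemma step:
  assumes "(hg_ehrhart H :: ('n,'k::field) spoly set) = hg_ring H"
  shows "(hg_ehrhart H' :: ('n,'k) spoly set) = hg_ring H'"
proof
  show "(hg_ehrhart H' :: ('n,'k) spoly set) \<subseteq> hg_ring H'"
  proof
    fix p :: "('n,'k) spoly" assume p: "p \<in> hg_ehrhart H'"
    then have "proj Z p \<in> hg_ring H'" using A'_to_A(1) assms proj_k by blast
    moreover have "proj Z p = p" using A'_to_A(2)[OF p] by (rule proj_id)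
    ultimately show "p \<in> hg_ring H'" by simp
  qed
  show "(hg_ring H' :: ('n,'k) spoly set) \<subseteq> hg_ehrhart H'"
  proof
    fix p :: "('n,'k) spoly" assume p: "p \<in> hg_ring H'"
    then show "p \<in> hg_ehrhart H'" using k'_sub_k k'_keys assms A_to_A' by blast
  qed
qed

end

theorem theorem3p9:
  fixes H H' :: "('v, 'n::finite) lhg"
  assumes "labeled_hypergraph H"
    and "separated H"
    and "is_minor H' H"
    and "(hg_ehrhart H' :: ('n, 'k::field) spoly set) \<noteq> hg_ring H'"
  shows "(hg_ehrhart H :: ('n, 'k) spoly set) \<noteq> hg_ring H"
proof -
  have "deletion_step\<^sup>*\<^sup>* H H'" using assms(3) by (simp add: is_minor_def)
  then have "(hg_ehrhart H' :: ('n, 'k) spoly set) \<noteq> hg_ring H' \<longrightarrow>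
      (hg_ehrhart H :: ('n, 'k) spoly set) \<noteq> hg_ring H"
  proof (induction rule: rtranclp_induct)
    case base then show ?case by simp
  next
    case (step H1 H2)
    from step.hyps(2) obtain i where "H2 = step_setup.H' H1 i"
      by (auto simp: deletion_step_def edges_def step_setup.H'_def)
    then have "(hg_ehrhart H2 :: ('n, 'k) spoly set) \<noteq> hg_ring H2 \<Longrightarrow>
       (hg_ehrhart H1 :: ('n, 'k) spoly set) \<noteq> hg_ring H1"
      using step_setup.step[of H1 i] by blast
    then show ?case using step.IH by blast
  qed
  then show ?thesis using assms(4) by blast
qed

end
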